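(* Let $d\in\mathbb{N}$, $1\le q\le p\le\infty$, and $\mathbf N=(N_1,\dots,N_d)\in\mathbb{N}_0^d$. There is a constant $c(d)>0$ such that for every $m\in\mathbb{N}$ with $m\le\vartheta(\mathbf N)/2$, $$\varrho_m^o(\mathcal{T}(2\mathbf N,d)_q,L_p)\ge c(d)\,\vartheta(\mathbf N)^{1/q-1/p}.$$
   Context: Here $\Omega=\mathbb{T}^d=[0,2\pi)^d$ with $\mu$ the normalized Lebesgue measure and $L_p=L_p(\mathbb{T}^d,\mu)$. $\mathcal{T}(\mathbf N,d)$ is the space of trigonometric polynomials $\sum_{\mathbf k\in\mathbb{Z}^d:|k_j|\le N_j,\,j=1,\dots,d}c_{\mathbf k}e^{i(\mathbf k,\mathbf x)}$, $\vartheta(\mathbf N)=\prod_{j=1}^d(2N_j+1)$, $2\mathbf N=(2N_1,\dots,2N_d)$, and $\mathcal{T}(\mathbf N,d)_q$ is the unit ball of $\mathcal{T}(\mathbf N,d)$ in $L_q$. For a class $\mathbf F\subset\mathcal{C}(\Omega)$, $$\varrho_m^o(\mathbf F,L_p)=\inf_{\xi}\inf_{\mathcal M}\sup_{f\in\mathbf F}\|f-\mathcal M(f(\xi^1),\dots,f(\xi^m))\|_p,$$ where $\xi$ ranges over all sets of $m$ points $\{\xi^1,\dots,\xi^m\}\subset\Omega$ and $\mathcal M$ over all (arbitrary, possibly nonlinear) mappings $\mathbb{C}^m\to L_p(\Omega,\mu)$. *)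

theory Defs
  imports "HOL-Analysis.Analysis" "HOL-Probability.Essential_Supremum"
begin

text \<open>The torus T^d, represented by the fundamental cube [0,2 pi)^d in real^'d;
  the dimension d is CARD('d).\<close>
definition torus :: "(real^'d) set" where
  "torus = {x. \<forall>j. 0 \<le> x$j \<and> x$j < 2 * pi}"

definition torus_measure :: "(real^'d) measure" where
  "torus_measure = uniform_measure lborel torus"

definition Lp_norm :: "ereal \<Rightarrow> (real^'d \<Rightarrow> complex) \<Rightarrow> ereal" where
  "Lp_norm p f =
     (if p = \<infinity> then esssup torus_measure (\<lambda>x. ereal (norm (f x)))
      else (let I = (\<integral>\<^sup>+ x. ennreal (norm (f x) powr real_of_ereal p) \<partial>torus_measure)
            in if I = \<infinity> then \<infinity> else ereal (enn2real I powr (1 / real_of_ereal p))))"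

definition Lp_space :: "ereal \<Rightarrow> (real^'d \<Rightarrow> complex) set" where
  "Lp_space p = {g. g \<in> borel_measurable torus_measure \<and> Lp_norm p g < \<infinity>}"

definition freqs :: "('d \<Rightarrow> nat) \<Rightarrow> ('d \<Rightarrow> int) set" where
  "freqs N = {k. \<forall>j. \<bar>k j\<bar> \<le> int (N j)}"

definition trig_poly :: "('d::finite \<Rightarrow> nat) \<Rightarrow> (real^'d \<Rightarrow> complex) set" where
  "trig_poly N = {f. \<exists>c :: ('d \<Rightarrow> int) \<Rightarrow> complex.
      f = (\<lambda>x. \<Sum>k\<in>freqs N. c k * cis (\<Sum>j\<in>UNIV. of_int (k j) * x$j))}"

definition trig_poly_ball :: "('d::finite \<Rightarrow> nat) \<Rightarrow> ereal \<Rightarrow> (real^'d \<Rightarrow> complex) set" where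
  "trig_poly_ball N q = {f \<in> trig_poly N. Lp_norm q f \<le> 1}"

definition vartheta :: "('d::finite \<Rightarrow> nat) \<Rightarrow> nat" where
  "vartheta N = (\<Prod>j\<in>UNIV. 2 * N j + 1)"

definition optimal_recovery ::
    "nat \<Rightarrow> (real^'d \<Rightarrow> complex) set \<Rightarrow> ereal \<Rightarrow> ereal" where
  "optimal_recovery m F p =
     (INF \<xi> \<in> {\<xi>. length \<xi> = m \<and> distinct \<xi> \<and> set \<xi> \<subseteq> torus}.
        INF M \<in> {M :: complex list \<Rightarrow> (real^'d \<Rightarrow> complex). \<forall>v. M v \<in> Lp_space p}.
          SUP f \<in> F. Lp_norm p (\<lambda>x. f x - M (map f \<xi>) x))"

definition recip :: "ereal \<Rightarrow> real" where
  "recip p = (if p = \<infinity> then 0 else 1 / real_of_ereal p)"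

end

theory Submission
  imports Defs
begin



lemma integral_lborel_prod:
  fixes f :: "'a::euclidean_space \<Rightarrow> real \<Rightarrow> complex"
  assumes int: "\<And>b. b \<in> Basis \<Longrightarrow> integrable lborel (f b)"
  shows "(\<integral>x. (\<Prod>b\<in>Basis. f b (x \<bullet> b)) \<partial>(lborel::'a measure)) = (\<Prod>b\<in>Basis. \<integral>x. f b x \<partial>lborel)"
proof -
  interpret finite_product_sigma_finite "\<lambda>_. lborel" "Basis::'a set"
    proof qed simp
  have meas[measurable]: "\<And>b. b \<in> Basis \<Longrightarrow> f b \<in> borel_measurable borel"
    using int by (auto dest: borel_measurable_integrable)
  have mg: "(\<lambda>g. \<Sum>b\<in>Basis. g b *\<^sub>R b) \<in> measurable (\<Pi>\<^sub>M b\<in>(Basis::'a set). lborel) (borel::'a measure)"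
    by measurable
  have "(\<integral>x. (\<Prod>b\<in>Basis. f b (x \<bullet> b)) \<partial>(lborel::'a measure)) =
     (\<integral>g. (\<Prod>b\<in>Basis. f b ((\<Sum>b'\<in>Basis. g b' *\<^sub>R b') \<bullet> b)) \<partial>(\<Pi>\<^sub>M b\<in>(Basis::'a set). lborel))"
    apply (subst lborel_eq)
    apply (rule integral_distr[OF mg])
    by measurable
  also have "\<dots> = (\<integral>g. (\<Prod>b\<in>Basis. f b (g b)) \<partial>(\<Pi>\<^sub>M b\<in>(Basis::'a set). lborel))"
    apply (rule Bochner_Integration.integral_cong[OF refl])
    apply (rule prod.cong[OF refl])
    apply (simp add: inner_sum_left inner_Basis if_distrib cong: if_cong)
    done
  also have "\<dots> = (\<Prod>b\<in>Basis. \<integral>x. f b x \<partial>lborel)"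
    by (rule product_integral_prod) (auto intro: int)
  finally show ?thesis .
qed



lemma cis_deriv: "((\<lambda>t::real. cis (r * t)) has_vector_derivative (cis (r * t) * (\<i> * of_real r))) (at t within S)"
proof -
  have e: "\<And>t. exp (t *\<^sub>R (\<i> * of_real r)) = cis (r * t)"
    by (simp add: cis_conv_exp scaleR_conv_of_real algebra_simps)
  show ?thesis using exp_scaleR_has_vector_derivative_right[where t=t and A="\<i> * of_real r" and T=S]
    unfolding e .
qed

lemma one_dim_Icc: fixes r :: int
  assumes "r \<noteq> 0"
  shows "(\<integral>t. indicator {0..2*pi} t *\<^sub>R cis (of_int r * t) \<partial>lborel) = 0"
proof -
  have "(\<integral>t. indicator {0..2*pi} t *\<^sub>R cis (of_int r * t) \<partial>lborel)
     = cis (of_int r * (2*pi)) / (\<i> * of_int r) - cis (of_int r * 0) / (\<i> * of_int r)"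
  proof (rule integral_FTC_atLeastAtMost)
    fix x :: real
    show "((\<lambda>t. cis (of_int r * t) / (\<i> * of_int r)) has_vector_derivative cis (of_int r * x)) (at x within {0..2*pi})"
      using has_vector_derivative_divide[OF cis_deriv[of "of_int r" x "{0..2*pi}"], where a="\<i> * of_int r"] assms
      by simp
  qed (auto intro!: continuous_intros)
  also have "\<dots> = 0"
  proof -
    have "cis (of_int r * (2*pi)) = 1"
      using cis_multiple_2pi[of "of_int r"] by (simp add: mult.commute)
    then show ?thesis by simp
  qed
  finally show ?thesis .
qed


lemma Basis_cart_real: "(Basis::(real^'n::finite) set) = range (\<lambda>j. axis j 1)"
  by (auto simp: Basis_vec_def)

lemma prod_Basis_cart: "(\<Prod>b\<in>(Basis::(real^'n::finite) set). f b) = (\<Prod>j\<in>UNIV. f (axis j 1))"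
proof -
  have "inj (\<lambda>j::'n. axis j (1::real))" by (auto simp: inj_on_def axis_eq_axis)
  then show ?thesis unfolding Basis_cart_real by (simp add: prod.reindex)
qed

lemma emeasure_cbox_cart:
  fixes l u :: "real^'n::finite"
  assumes "\<And>j. l$j \<le> u$j"
  shows "emeasure lborel (cbox l u) = ennreal (\<Prod>j\<in>UNIV. u$j - l$j)"
proof -
  have "\<forall>b\<in>Basis. l \<bullet> b \<le> u \<bullet> b" using assms by (auto simp: Basis_cart_real cart_eq_inner_axis[symmetric])
  then show ?thesis
    by (simp add: emeasure_lborel_cbox_eq prod_Basis_cart cart_eq_inner_axis[symmetric] inner_diff_left)
qed

lemma emeasure_box_cart:
  fixes l u :: "real^'n::finite"
  assumes "\<And>j. l$j \<le> u$j"
  shows "emeasure lborel (box l u) = ennreal (\<Prod>j\<in>UNIV. u$j - l$j)"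
proof -
  have "\<forall>b\<in>Basis. l \<bullet> b \<le> u \<bullet> b" using assms by (auto simp: Basis_cart_real cart_eq_inner_axis[symmetric])
  then show ?thesis
    by (simp add: emeasure_lborel_box_eq prod_Basis_cart cart_eq_inner_axis[symmetric] inner_diff_left)
qed

lemma torus_sets[measurable]: "torus \<in> sets (borel :: (real^'d::finite) measure)"
proof -
  have "torus = {x \<in> space (borel :: (real^'d::finite) measure). \<forall>j. 0 \<le> x$j \<and> x$j < 2 * pi}"
    by (simp add: torus_def)
  also have "\<dots> \<in> sets borel" by measurable
  finally show ?thesis .
qed

lemma torus_sets_lborel[measurable]: "torus \<in> sets (lborel :: (real^'d::finite) measure)"
  by simp

lemma emeasure_torus: "emeasure lborel (torus :: (real^'d::finite) set) = ennreal ((2*pi)^CARD('d))"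
proof (rule antisym)
  have "torus \<subseteq> cbox (0::real^'d) (\<chi> j. 2*pi)"
    by (auto simp: torus_def mem_box_cart less_imp_le)
  then have "emeasure lborel (torus :: (real^'d) set) \<le> emeasure lborel (cbox (0::real^'d) (\<chi> j. 2*pi))"
    by (intro emeasure_mono) auto
  also have "\<dots> = ennreal ((2*pi)^CARD('d))"
    by (subst emeasure_cbox_cart) auto
  finally show "emeasure lborel (torus :: (real^'d) set) \<le> ennreal ((2*pi)^CARD('d))" .
next
  have "box (0::real^'d) (\<chi> j. 2*pi) \<subseteq> torus"
    by (auto simp: torus_def mem_box_cart less_imp_le)
  then have "emeasure lborel (box (0::real^'d) (\<chi> j. 2*pi)) \<le> emeasure lborel (torus :: (real^'d) set)"
    by (intro emeasure_mono) auto
  moreover have "emeasure lborel (box (0::real^'d) (\<chi> j. 2*pi)) = ennreal ((2*pi)^CARD('d))"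
    by (subst emeasure_box_cart) auto
  ultimately show "ennreal ((2*pi)^CARD('d)) \<le> emeasure lborel (torus :: (real^'d) set)" by simp
qed



lemma cis_sum: "finite A \<Longrightarrow> cis (\<Sum>j\<in>A. f j) = (\<Prod>j\<in>A. cis (f j))"
  by (induction A rule: finite_induct) (auto simp: cis_mult[symmetric])

lemma one_dim: fixes r :: int
  shows "(\<integral>t. indicator {0..2*pi} t *\<^sub>R cis (of_int r * t) \<partial>lborel) = (if r = 0 then 2*pi else 0)"
proof (cases "r = 0")
  case True
  have "(\<integral>t. indicator {0..2*pi} t *\<^sub>R cis (of_int r * t) \<partial>lborel) = (\<integral>t. complex_of_real (indicator {0..2*pi} t) \<partial>lborel)"
    using True by (simp add: scaleR_conv_of_real)
  also have "\<dots> = 2*pi" by simp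
  finally show ?thesis using True by simp
qed (simp add: one_dim_Icc)

definition ee :: "('d::finite \<Rightarrow> int) \<Rightarrow> real^'d \<Rightarrow> complex" where
  "ee n x = cis (\<Sum>j\<in>UNIV. of_int (n j) * x$j)"

lemma ee_measurable[measurable]: "ee n \<in> borel_measurable borel"
  unfolding ee_def by (intro borel_measurable_continuous_onI continuous_intros)

lemma norm_ee[simp]: "norm (ee n x) = 1" by (simp add: ee_def)

lemma torus_int_lborel:
  "(\<integral>x. indicator torus x * ee n x \<partial>(lborel :: (real^'d::finite) measure)) =
     (if n = (\<lambda>_. 0) then (2*pi)^CARD('d) else 0)"
proof -
  define g where "g j t = indicator {0..2*pi} t *\<^sub>R cis (of_int (n j) * t)" for j and t :: real
  define jj where "jj b = (SOME j. b = axis j (1::real))" for b :: "real^'d"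
  have jj: "jj (axis j 1) = j" for j
    unfolding jj_def by (rule some_equality) (auto simp: axis_eq_axis)
  have ae: "AE x in lborel. (\<forall>j\<in>UNIV. (x::real^'d) $ j \<noteq> 2*pi)"
    by (intro AE_finite_allI) (auto simp: cart_eq_inner_axis intro!: AE_lborel_inner_neq simp: Basis_cart_real)
  have "(\<integral>x. indicator torus x * ee n x \<partial>(lborel :: (real^'d) measure)) =
        (\<integral>x. (\<Prod>b\<in>Basis. g (jj b) (x \<bullet> b)) \<partial>(lborel :: (real^'d) measure))"
  proof (rule integral_cong_AE)
    show "AE x in lborel. indicator torus x * ee n x = (\<Prod>b\<in>Basis. g (jj b) (x \<bullet> b))"
      using ae
    proof eventually_elim
      case (elim x)
      have "(\<Prod>b\<in>Basis. g (jj b) (x \<bullet> b)) = (\<Prod>j\<in>UNIV. g j (x $ j))"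
        by (simp add: prod_Basis_cart jj cart_eq_inner_axis)
      also have "\<dots> = indicator torus x * ee n x"
      proof (cases "x \<in> torus")
        case True
        then have "\<And>j. x $ j \<in> {0..2*pi}" by (auto simp: torus_def less_imp_le)
        then show ?thesis using True by (simp add: g_def ee_def cis_sum)
      next
        case False
        then obtain j where "x $ j \<notin> {0..2*pi}" using elim by (auto simp: torus_def less_le)
        then have "g j (x $ j) = 0" by (simp add: g_def)
        then show ?thesis using False by (auto intro: prod_zero)
      qed
      finally show ?case by simp
    qed
  qed (unfold g_def, measurable, auto intro!: borel_measurable_continuous_onI continuous_intros)
  also have "\<dots> = (\<Prod>b\<in>Basis. \<integral>t. g (jj b) t \<partial>lborel)"
    by (rule integral_lborel_prod) (auto simp: g_def intro!: borel_integrable_atLeastAtMost'[unfolded set_integrable_def] continuous_intros)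
  also have "\<dots> = (\<Prod>j\<in>UNIV. \<integral>t. g j t \<partial>lborel)"
    by (simp add: prod_Basis_cart jj)
  also have "\<dots> = (\<Prod>j\<in>UNIV. if n j = 0 then 2*pi else 0)"
    by (simp add: g_def one_dim)
  also have "\<dots> = (if n = (\<lambda>_. 0) then (2*pi)^CARD('d) else 0)"
  proof (cases "n = (\<lambda>_. 0)")
    case False
    then obtain j where "n j \<noteq> 0" by auto
    then show ?thesis using False by (auto intro: prod_zero)
  qed simp
  finally show ?thesis .
qed



lemma space_torus_measure[simp]: "space torus_measure = UNIV"
  by (simp add: torus_measure_def)

lemma sets_torus_measure[simp, measurable_cong]: "sets (torus_measure :: (real^'d::finite) measure) = sets borel"
  by (simp add: torus_measure_def)

lemma torus_vol_pos: "(0::real) < (2*pi)^CARD('d::finite)" by simp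

lemma torus_measure_density:
  "(torus_measure :: (real^'d::finite) measure) =
     density lborel (\<lambda>x. ennreal (indicator torus x / (2*pi)^CARD('d)))"
proof -
  have "1 / ennreal ((2*pi)^CARD('d)) = ennreal (1 / (2*pi)^CARD('d))"
    using divide_ennreal[of 1 "(2*pi)^CARD('d)"] by simp
  then show ?thesis
  unfolding torus_measure_def uniform_measure_def emeasure_torus
  by (intro density_cong) (auto split: split_indicator)
qed

lemma emeasure_torus_UNIV[simp]: "emeasure (torus_measure :: (real^'d::finite) measure) UNIV = 1"
  unfolding torus_measure_def
  by (subst emeasure_uniform_measure) (auto simp: emeasure_torus divide_ennreal)

lemma measure_torus_UNIV[simp]: "measure (torus_measure :: (real^'d::finite) measure) UNIV = 1"
  by (simp add: measure_def)

lemma fm_torus: "finite_measure (torus_measure :: (real^'d::finite) measure)"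
  by (rule finite_measureI) simp

interpretation torus: finite_measure "torus_measure :: (real^'d::finite) measure"
  by (rule fm_torus)

lemma AE_torus: "AE x in (torus_measure :: (real^'d::finite) measure). x \<in> torus"
  unfolding torus_measure_def by (rule AE_uniform_measureI) auto

lemma integral_torus:
  fixes f :: "real^'d::finite \<Rightarrow> complex"
  assumes [measurable]: "f \<in> borel_measurable borel"
  shows "(\<integral>x. f x \<partial>torus_measure) = (\<integral>x. indicator torus x * f x \<partial>lborel) / (2*pi)^CARD('d)"
proof -
  have "(\<integral>x. f x \<partial>torus_measure) = (\<integral>x. (indicator torus x / (2*pi)^CARD('d)) *\<^sub>R f x \<partial>lborel)"
    unfolding torus_measure_density by (subst integral_density) auto
  also have "\<dots> = (\<integral>x. (indicator torus x * f x) / (2*pi)^CARD('d) \<partial>lborel)"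
    by (intro Bochner_Integration.integral_cong) (auto simp: scaleR_conv_of_real split: split_indicator)
  also have "\<dots> = (\<integral>x. indicator torus x * f x \<partial>lborel) / (2*pi)^CARD('d)"
    by (rule integral_divide_zero)
  finally show ?thesis .
qed

lemma integrable_torus_bounded:
  fixes f :: "real^'d::finite \<Rightarrow> complex"
  assumes "f \<in> borel_measurable borel" "\<And>x. norm (f x) \<le> B"
  shows "integrable torus_measure f"
  using assms by (intro torus.integrable_const_bound[where B=B]) auto

lemma torus_int: "(\<integral>x. ee n x \<partial>(torus_measure :: (real^'d::finite) measure)) = (if n = (\<lambda>_. 0) then 1 else 0)"
  by (simp add: integral_torus torus_int_lborel)

lemma ee_mult_cnj: "ee k x * cnj (ee l x) = ee (\<lambda>j. k j - l j) x"
  by (simp add: ee_def cis_cnj cis_mult sum_subtractf[symmetric] algebra_simps)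

lemma parseval:
  fixes a :: "('d::finite \<Rightarrow> int) \<Rightarrow> complex"
  assumes "finite F"
  shows "(\<integral>x. (norm (\<Sum>k\<in>F. a k * ee k x))^2 \<partial>(torus_measure :: (real^'d) measure)) = (\<Sum>k\<in>F. (norm (a k))^2)"
proof -
  have eq: "complex_of_real ((norm (\<Sum>k\<in>F. a k * ee k x))^2) =
      (\<Sum>k\<in>F. \<Sum>l\<in>F. a k * cnj (a l) * ee (\<lambda>j. k j - l j) x)" for x :: "real^'d"
  proof -
    have "complex_of_real ((norm (\<Sum>k\<in>F. a k * ee k x))^2) = (\<Sum>k\<in>F. a k * ee k x) * cnj (\<Sum>k\<in>F. a k * ee k x)"
      by (rule complex_norm_square)
    also have "\<dots> = (\<Sum>k\<in>F. \<Sum>l\<in>F. a k * cnj (a l) * (ee k x * cnj (ee l x)))"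
      apply (simp add: sum_distrib_left sum_distrib_right cnj_sum algebra_simps)
      apply (rule sum.swap)
      done
    finally show ?thesis by (simp add: ee_mult_cnj)
  qed
  have "complex_of_real (\<integral>x. (norm (\<Sum>k\<in>F. a k * ee k x))^2 \<partial>(torus_measure :: (real^'d) measure))
     = (\<integral>x. (\<Sum>k\<in>F. \<Sum>l\<in>F. a k * cnj (a l) * ee (\<lambda>j. k j - l j) x) \<partial>(torus_measure :: (real^'d) measure))"
    by (simp only: integral_complex_of_real[symmetric] eq)
  also have "\<dots> = (\<Sum>k\<in>F. \<Sum>l\<in>F. a k * cnj (a l) * (\<integral>x. ee (\<lambda>j. k j - l j) x \<partial>(torus_measure :: (real^'d) measure)))"
  proof -
    have i: "integrable torus_measure (\<lambda>x. a k * cnj (a l) * ee (\<lambda>j. k j - l j) (x :: real^'d))" for k l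
      by (intro integrable_mult_right integrable_torus_bounded[where B=1]) auto
    have "(\<integral>x. (\<Sum>k\<in>F. \<Sum>l\<in>F. a k * cnj (a l) * ee (\<lambda>j. k j - l j) x) \<partial>(torus_measure :: (real^'d) measure))
       = (\<Sum>k\<in>F. \<integral>x. (\<Sum>l\<in>F. a k * cnj (a l) * ee (\<lambda>j. k j - l j) x) \<partial>(torus_measure :: (real^'d) measure))"
      by (simp add: i integrable_sum)
    also have "\<dots> = (\<Sum>k\<in>F. \<Sum>l\<in>F. \<integral>x. a k * cnj (a l) * ee (\<lambda>j. k j - l j) x \<partial>(torus_measure :: (real^'d) measure))"
      by (simp add: i)
    finally show ?thesis by simp
  qed
  also have "\<dots> = (\<Sum>k\<in>F. \<Sum>l\<in>F. if l = k then a k * cnj (a l) else 0)"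
  proof (intro sum.cong refl)
    fix k l :: "'d \<Rightarrow> int"
    have "((\<lambda>j. k j - l j) = (\<lambda>_. 0)) = (l = k)" by (auto simp: fun_eq_iff)
    then show "a k * cnj (a l) * (\<integral>x. ee (\<lambda>j. k j - l j) x \<partial>(torus_measure :: (real^'d) measure)) = (if l = k then a k * cnj (a l) else 0)"
      by (simp add: torus_int)
  qed
  also have "\<dots> = (\<Sum>k\<in>F. complex_of_real ((norm (a k))^2))"
    using assms by (simp add: complex_norm_square[symmetric])
  finally show ?thesis by (simp only: of_real_sum[symmetric] of_real_eq_iff)
qed



definition ip :: "'k set \<Rightarrow> ('k \<Rightarrow> complex) \<Rightarrow> ('k \<Rightarrow> complex) \<Rightarrow> complex" where
  "ip F u v = (\<Sum>k\<in>F. u k * cnj (v k))"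

lemma ip_diff_left: "ip F (\<lambda>k. x k - y k) v = ip F x v - ip F y v"
  by (simp add: ip_def algebra_simps sum_subtractf)

lemma ip_lin_left: "finite U \<Longrightarrow> ip F (\<lambda>k. \<Sum>u\<in>U. f u * u k) v = (\<Sum>u\<in>U. f u * ip F u v)"
  by (simp add: ip_def sum_distrib_left sum_distrib_right mult.assoc sum.swap[of _ F])

lemma ip_cnj: "ip F v u = cnj (ip F u v)"
  by (simp add: ip_def cnj_sum mult.commute)

lemma ip_self: "ip F u u = complex_of_real (\<Sum>k\<in>F. (norm (u k))^2)"
  by (simp only: ip_def of_real_sum complex_norm_square)

lemma ip_scale_left: "ip F (\<lambda>k. c * u k) v = c * ip F u v"
  by (simp add: ip_def sum_distrib_left mult.assoc)

definition orthonormal :: "'k set \<Rightarrow> ('k \<Rightarrow> complex) set \<Rightarrow> bool" where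
  "orthonormal F U \<longleftrightarrow> (\<forall>u\<in>U. \<forall>v\<in>U. ip F u v = (if u = v then 1 else 0))"

lemma proj_orth:
  assumes "finite U" "orthonormal F U" "u0 \<in> U"
  shows "ip F (\<lambda>k. w k - (\<Sum>u\<in>U. ip F w u * u k)) u0 = 0"
proof -
  have "ip F (\<lambda>k. w k - (\<Sum>u\<in>U. ip F w u * u k)) u0 = ip F w u0 - (\<Sum>u\<in>U. ip F w u * ip F u u0)"
    by (simp add: ip_diff_left ip_lin_left assms(1))
  also have "(\<Sum>u\<in>U. ip F w u * ip F u u0) = (\<Sum>u\<in>U. if u = u0 then ip F w u else 0)"
    using assms(2,3) by (intro sum.cong refl) (auto simp: orthonormal_def)
  also have "\<dots> = ip F w u0" using assms(1,3) by simp
  finally show ?thesis by simp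
qed

lemma orth_all_zero:
  assumes "\<forall>k\<in>F. r k = 0"
  shows "ip F a r = 0"
  using assms by (simp add: ip_def)

lemma gram_schmidt:
  assumes "finite F"
  shows "\<exists>U. finite U \<and> card U \<le> length cs \<and> orthonormal F U \<and>
           (\<forall>a. (\<forall>u\<in>U. ip F a u = 0) \<longrightarrow> (\<forall>c\<in>set cs. ip F a c = 0))"
proof (induction cs)
  case Nil
  show ?case by (rule exI[of _ "{}"]) (simp add: orthonormal_def)
next
  case (Cons c cs)
  then obtain U where U: "finite U" "card U \<le> length cs" "orthonormal F U"
    "\<And>a. (\<forall>u\<in>U. ip F a u = 0) \<Longrightarrow> (\<forall>c\<in>set cs. ip F a c = 0)" by blast
  define r where "r = (\<lambda>k. c k - (\<Sum>u\<in>U. ip F c u * u k))"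
  have r_orth: "ip F r u = 0" if "u \<in> U" for u
    unfolding r_def by (rule proj_orth[OF U(1) U(3) that])
  have c_eq: "ip F a c = ip F a r" if "\<forall>u\<in>U. ip F a u = 0" for a
  proof -
    have "c = (\<lambda>k. r k + (\<Sum>u\<in>U. ip F c u * u k))" by (simp add: r_def)
    then have "ip F a c = ip F a (\<lambda>k. r k + (\<Sum>u\<in>U. ip F c u * u k))" by simp
    also have "\<dots> = ip F a r + (\<Sum>u\<in>U. cnj (ip F c u) * ip F a u)"
    proof -
      have "ip F a (\<lambda>k. r k + (\<Sum>u\<in>U. ip F c u * u k)) = cnj (ip F (\<lambda>k. r k + (\<Sum>u\<in>U. ip F c u * u k)) a)"
        by (rule ip_cnj)
      also have "ip F (\<lambda>k. r k + (\<Sum>u\<in>U. ip F c u * u k)) a = ip F r a + (\<Sum>u\<in>U. ip F c u * ip F u a)"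
        using ip_lin_left[OF U(1), of F "\<lambda>u. ip F c u" a]
        by (simp add: ip_def algebra_simps sum.distrib)
      finally show ?thesis by (simp add: cnj_sum ip_cnj[of F r a] ip_cnj[of F _ a])
    qed
    also have "\<dots> = ip F a r" using that by simp
    finally show ?thesis .
  qed
  show ?case
  proof (cases "\<forall>k\<in>F. r k = 0")
    case True
    show ?thesis
    proof (intro exI[of _ U] conjI allI impI)
      fix a assume a: "\<forall>u\<in>U. ip F a u = 0"
      show "\<forall>c'\<in>set (c # cs). ip F a c' = 0"
        using U(4)[OF a] c_eq[OF a] orth_all_zero[OF True] by auto
    qed (use U in auto)
  next
    case False
    define nr where "nr = (\<Sum>k\<in>F. (norm (r k))^2)"
    have nrpos: "nr > 0"
    proof -
      from False obtain k where "k \<in> F" "r k \<noteq> 0" by auto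
      then have "(norm (r k))^2 \<le> nr" "0 < (norm (r k))^2"
        unfolding nr_def using assms by (auto intro!: member_le_sum)
      then show ?thesis by linarith
    qed
    define s where "s = (\<lambda>k. complex_of_real (1 / sqrt nr) * r k)"
    have ss: "ip F s s = 1"
    proof -
      have "ip F s s = complex_of_real (1 / sqrt nr) * complex_of_real (1 / sqrt nr) * ip F r r"
        unfolding s_def ip_def sum_distrib_left by (intro sum.cong refl) (simp add: mult_ac)
      also have "ip F r r = complex_of_real nr" by (simp add: ip_self nr_def)
      finally have "ip F s s = complex_of_real (1 / sqrt nr * (1 / sqrt nr) * nr)" by (simp only: of_real_mult)
      also have "1 / sqrt nr * (1 / sqrt nr) * nr = 1" using nrpos
        by (simp add: field_simps flip: power2_eq_square)
      finally show ?thesis by simp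
    qed
    have su: "ip F s u = 0" if "u \<in> U" for u
      unfolding s_def by (subst ip_scale_left) (simp add: r_orth[OF that])
    have us: "ip F u s = 0" if "u \<in> U" for u
      using su[OF that] ip_cnj[of F u s] by simp
    have snotin: "s \<notin> U"
      using su ss by force
    show ?thesis
    proof (intro exI[of _ "insert s U"] conjI allI impI)
      show "finite (insert s U)" using U(1) by simp
      show "card (insert s U) \<le> length (c # cs)" using U(1,2) snotin by simp
      show "orthonormal F (insert s U)"
        using U(3) ss su us by (auto simp: orthonormal_def)
      fix a assume a: "\<forall>u\<in>insert s U. ip F a u = 0"
      then have a': "\<forall>u\<in>U. ip F a u = 0" by simp
      have "ip F a r = 0"
      proof -
        have "r = (\<lambda>k. complex_of_real (sqrt nr) * s k)"
          using nrpos by (auto simp: s_def fun_eq_iff)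
        then have "ip F a r = cnj (complex_of_real (sqrt nr)) * ip F a s"
          by (simp add: ip_def sum_distrib_left algebra_simps)
        then show ?thesis using a by simp
      qed
      then show "\<forall>c'\<in>set (c # cs). ip F a c' = 0"
        using U(4)[OF a'] c_eq[OF a'] by auto
    qed
  qed
qed


lemma ip_lin_right: "finite U \<Longrightarrow> ip F v (\<lambda>k. \<Sum>u\<in>U. f u * u k) = (\<Sum>u\<in>U. cnj (f u) * ip F v u)"
proof -
  assume U: "finite U"
  have "ip F v (\<lambda>k. \<Sum>u\<in>U. f u * u k) = cnj (ip F (\<lambda>k. \<Sum>u\<in>U. f u * u k) v)" by (rule ip_cnj)
  also have "ip F (\<lambda>k. \<Sum>u\<in>U. f u * u k) v = (\<Sum>u\<in>U. f u * ip F u v)" by (rule ip_lin_left[OF U])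
  finally show ?thesis by (simp add: cnj_sum ip_cnj[of F v, symmetric])
qed

lemma ip_diff_right: "ip F v (\<lambda>k. x k - y k) = ip F v x - ip F v y"
  by (simp add: ip_def algebra_simps sum_subtractf)

lemma norm_cis_diff: "norm (cis a - cis b) \<le> \<bar>a - b\<bar>"
proof -
  define t where "t = a - b"
  have "cis a - cis b = cis b * (cis t - 1)"
    by (simp add: t_def cis_mult[symmetric] algebra_simps flip: cis_divide)
  then have n: "norm (cis a - cis b) = norm (cis t - 1)" by (simp add: norm_mult)
  have "(norm (cis t - 1))^2 = (cos t - 1)^2 + (sin t)^2"
    by (simp add: cmod_power2)
  also have "\<dots> = 2 - 2 * cos t"
    using sin_cos_squared_add[of t] by (simp add: power2_eq_square algebra_simps)
  also have "\<dots> = 4 * (sin (t/2))^2"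
    using cos_double_sin[of "t/2"] by simp
  also have "\<dots> \<le> 4 * (t/2)^2"
  proof -
    have "(sin (t/2))^2 \<le> (t/2)^2"
      by (metis abs_sin_x_le_abs_x abs_ge_zero power_mono power2_abs)
    then show ?thesis by simp
  qed
  also have "\<dots> = t^2" by (simp add: power2_eq_square)
  finally have "(norm (cis t - 1))^2 \<le> \<bar>t\<bar>^2" by simp
  then have "norm (cis t - 1) \<le> \<bar>t\<bar>"
    using abs_le_square_iff[of "norm (cis t - 1)" "\<bar>t\<bar>"] by simp
  then show ?thesis using n by (simp add: t_def)
qed

lemma freqs_PiE: "freqs N = PiE UNIV (\<lambda>j. {- int (N j) .. int (N j)})"
proof (intro set_eqI iffI)
  fix x assume "x \<in> freqs N"
  then have "\<And>j. x j \<in> {- int (N j) .. int (N j)}" by (auto simp: freqs_def abs_le_iff) (metis minus_le_iff)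
  then show "x \<in> PiE UNIV (\<lambda>j. {- int (N j) .. int (N j)})"
    by (auto simp: PiE_def extensional_def)
next
  fix x assume "x \<in> PiE UNIV (\<lambda>j. {- int (N j) .. int (N j)})"
  then have h: "\<And>j. x j \<in> {- int (N j) .. int (N j)}" by (auto simp: PiE_def Pi_def)
  have "\<bar>x j\<bar> \<le> int (N j)" for j
    using h[of j] by (simp only: atLeastAtMost_iff) arith
  then show "x \<in> freqs N" by (auto simp: freqs_def)
qed

lemma finite_freqs[simp]: "finite (freqs (N :: 'd::finite \<Rightarrow> nat))"
  unfolding freqs_PiE by (rule finite_PiE) auto

lemma card_freqs: "card (freqs (N :: 'd::finite \<Rightarrow> nat)) = vartheta N"
proof -
  have "card (freqs N) = (\<Prod>j\<in>UNIV. card {- int (N j) .. int (N j)})"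
    unfolding freqs_PiE by (rule card_PiE) auto
  also have "\<dots> = vartheta N"
    unfolding vartheta_def by (intro prod.cong refl) auto
  finally show ?thesis .
qed

lemma vartheta_pos: "vartheta N > 0"
  by (simp add: vartheta_def)


lemma norm_trig_le: "norm (\<Sum>k\<in>F. a k * ee k x) \<le> (\<Sum>k\<in>F. norm (a k))"
  by (rule order_trans[OF norm_sum]) (simp add: norm_mult)

lemma trig_measurable[measurable]: "(\<lambda>x. \<Sum>k\<in>F. a k * ee k x) \<in> borel_measurable borel"
  by measurable

lemma key_exists:
  fixes N :: "'d::finite \<Rightarrow> nat" and \<xi> :: "(real^'d) list"
  assumes m: "real (length \<xi>) \<le> real (vartheta N) / 2"
  shows "\<exists>a x0 A. x0 \<in> torus \<and> (\<forall>y\<in>set \<xi>. (\<Sum>k\<in>freqs N. a k * ee k y) = 0) \<and>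
     (\<Sum>k\<in>freqs N. a k * ee k x0) = complex_of_real A \<and> A = (\<Sum>k\<in>freqs N. (norm (a k))^2) \<and>
     real (vartheta N) / 2 \<le> A"
proof -
  define F where "F = freqs N"
  have finF: "finite F" by (simp add: F_def)
  define w where "w x = (\<lambda>k. cnj (ee k x))" for x :: "real^'d"
  have ipw: "ip F a (w x) = (\<Sum>k\<in>F. a k * ee k x)" for a x
    by (simp add: ip_def w_def)
  obtain U where U: "finite U" "card U \<le> length (map w \<xi>)" "orthonormal F U"
    "\<And>a. (\<forall>u\<in>U. ip F a u = 0) \<Longrightarrow> (\<forall>c\<in>set (map w \<xi>). ip F a c = 0)"
    using gram_schmidt[OF finF, of "map w \<xi>"] by blast
  define S where "S x = (\<Sum>u\<in>U. (norm (\<Sum>k\<in>F. u k * ee k x))^2)" for x :: "real^'d"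
  have ipwu: "ip F (w x) u = cnj (\<Sum>k\<in>F. u k * ee k x)" for x u
    by (simp add: ip_def w_def cnj_sum mult.commute)
  have unit: "(\<Sum>k\<in>F. (norm (u k))^2) = 1" if "u \<in> U" for u
  proof -
    have "ip F u u = 1" using U(3) that by (simp add: orthonormal_def)
    then show ?thesis by (simp only: ip_self of_real_eq_1_iff)
  qed
  define B where "B = (\<Sum>u\<in>U. (\<Sum>k\<in>F. norm (u k))^2)"
  have Sbound: "norm (S x) \<le> B" for x
  proof -
    have "S x \<ge> 0" by (simp add: S_def sum_nonneg)
    moreover have "S x \<le> B"
      unfolding S_def B_def
      by (intro sum_mono power_mono norm_trig_le) auto
    ultimately show ?thesis by simp
  qed
  have Smeas[measurable]: "S \<in> borel_measurable borel"
    unfolding S_def by measurable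
  have Sint: "integrable torus_measure S"
    by (rule torus.integrable_const_bound[where B=B]) (use Sbound in auto)
  have intS: "(\<integral>x. S x \<partial>torus_measure) = real (card U)"
  proof -
    have "(\<integral>x. S x \<partial>torus_measure) = (\<Sum>u\<in>U. \<integral>x. (norm (\<Sum>k\<in>F. u k * ee k x))^2 \<partial>torus_measure)"
      unfolding S_def
    proof (rule Bochner_Integration.integral_sum)
      fix u
      show "integrable torus_measure (\<lambda>x. (norm (\<Sum>k\<in>F. u k * ee k x))^2)"
        by (rule torus.integrable_const_bound[where B="(\<Sum>k\<in>F. norm (u k))^2"])
           (auto intro!: power_mono norm_trig_le)
    qed
    also have "\<dots> = (\<Sum>u\<in>U. 1)"
      by (intro sum.cong refl) (simp add: parseval[OF finF] unit)
    finally show ?thesis by simp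
  qed
  obtain x0 where x0: "x0 \<in> torus" "S x0 \<le> real (card U)"
  proof (rule ccontr)
    assume "\<not> thesis"
    with that have gt: "\<And>x. x \<in> torus \<Longrightarrow> real (card U) < S x" by force
    have ae: "AE x in torus_measure. (\<lambda>_. real (card U)) x < S x"
      using AE_torus by eventually_elim (use gt in auto)
    have "(\<integral>x. real (card U) \<partial>(torus_measure :: (real^'d) measure)) < (\<integral>x. S x \<partial>torus_measure)"
    proof (rule finite_measure.integral_less_AE_space[OF fm_torus])
      show "integrable torus_measure (\<lambda>x. real (card U))" by simp
      show "integrable torus_measure S" by (rule Sint)
      show "AE x in torus_measure. real (card U) < S x" using ae by simp
      show "emeasure torus_measure (space (torus_measure :: (real^'d) measure)) \<noteq> 0" by simp
    qed
    moreover have "(\<integral>x. real (card U) \<partial>(torus_measure :: (real^'d) measure)) = real (card U)"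
      by simp
    ultimately show False by (simp add: intS)
  qed
  define w0 where "w0 = w x0"
  define c where "c u = ip F w0 u" for u
  define P where "P = (\<lambda>k. \<Sum>u\<in>U. c u * u k)"
  define a where "a = (\<lambda>k. w0 k - P k)"
  have orth: "ip F a u = 0" if "u \<in> U" for u
    unfolding a_def P_def c_def by (rule proj_orth[OF U(1,3) that])
  have constr: "\<forall>y\<in>set \<xi>. (\<Sum>k\<in>F. a k * ee k y) = 0"
    using U(4)[of a] orth by (auto simp: ipw)
  have aP: "ip F a P = 0"
    unfolding P_def by (simp add: ip_lin_right[OF U(1)] orth)
  have aa: "ip F a a = ip F a w0"
  proof -
    have "ip F a a = ip F a w0 - ip F a P" by (simp only: a_def ip_diff_right)
    then show ?thesis by (simp add: aP)
  qed
  have w0w0: "ip F w0 w0 = of_nat (card F)"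
  proof -
    have "ip F w0 w0 = (\<Sum>k\<in>F. complex_of_real ((norm (w0 k))^2))"
      by (simp only: ip_def complex_norm_square)
    also have "\<dots> = (\<Sum>k\<in>F. 1)" by (simp add: w0_def w_def)
    finally show ?thesis by simp
  qed
  have Pw0: "ip F P w0 = complex_of_real (S x0)"
  proof -
    have "ip F P w0 = (\<Sum>u\<in>U. c u * ip F u w0)"
      unfolding P_def by (rule ip_lin_left[OF U(1)])
    also have "\<dots> = (\<Sum>u\<in>U. complex_of_real ((norm (c u))^2))"
    proof (intro sum.cong refl)
      fix u assume "u \<in> U"
      have "ip F u w0 = cnj (c u)" by (simp add: c_def ip_cnj[of F u w0])
      then show "c u * ip F u w0 = complex_of_real ((norm (c u))^2)"
        by (simp only: complex_norm_square)
    qed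
    also have "\<dots> = complex_of_real (S x0)"
      unfolding S_def of_real_sum
    proof (intro sum.cong refl)
      fix u
      show "complex_of_real ((norm (c u))^2) = complex_of_real ((norm (\<Sum>k\<in>F. u k * ee k x0))^2)"
        by (simp only: c_def w0_def ipwu complex_mod_cnj)
    qed
    finally show ?thesis .
  qed
  have aw0: "ip F a w0 = complex_of_real (real (card F) - S x0)"
    unfolding a_def by (simp add: ip_diff_left w0w0 Pw0)
  define A where "A = (\<Sum>k\<in>F. (norm (a k))^2)"
  have "complex_of_real A = complex_of_real (real (card F) - S x0)"
    using aa aw0 by (simp add: A_def ip_self)
  then have A: "A = real (card F) - S x0" by (simp only: of_real_eq_iff)
  have cardF: "card F = vartheta N" by (simp add: F_def card_freqs)
  have "card U \<le> length \<xi>" using U(2) by simp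
  then have "real (vartheta N) / 2 \<le> A"
    using A x0(2) m cardF by linarith
  moreover have "(\<Sum>k\<in>F. a k * ee k x0) = complex_of_real A"
    using aw0 A by (simp add: w0_def ipw)
  ultimately show ?thesis
    using x0(1) constr unfolding A_def F_def by blast
qed



lemma ereal_finite_ge1:
  assumes "1 \<le> q" "q \<noteq> \<infinity>"
  shows "q = ereal (real_of_ereal q)" "1 \<le> real_of_ereal q"
  using assms by (cases q; auto)+

lemma Lp_le_1:
  fixes f :: "real^'d::finite \<Rightarrow> complex" and q :: ereal
  assumes q: "1 \<le> q" and meas[measurable]: "f \<in> borel_measurable borel"
    and bd: "\<And>x. norm (f x) \<le> Bd" and Bd: "0 < Bd" and I1: "0 < I1"
    and int: "(\<integral>x. norm (f x) \<partial>torus_measure) \<le> I1"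
    and key: "Bd powr (1 - recip q) * I1 powr (recip q) \<le> 1"
  shows "Lp_norm q f \<le> 1"
proof (cases "q = \<infinity>")
  case True
  then have "Bd \<le> 1" using key I1 by (simp add: recip_def)
  have "esssup torus_measure (\<lambda>x. ereal (norm (f x))) \<le> ereal Bd"
    by (rule esssup_I) (auto simp: bd)
  also have "\<dots> \<le> 1" using \<open>Bd \<le> 1\<close> by simp
  finally show ?thesis using True by (simp add: Lp_norm_def)
next
  case False
  define r where "r = real_of_ereal q"
  have r1: "1 \<le> r" using ereal_finite_ge1[OF q False] by (simp add: r_def)
  have rq: "recip q = 1 / r" using False by (simp add: recip_def r_def)
  have fint: "integrable torus_measure (\<lambda>x. Bd powr (r - 1) * norm (f x))"
    by (rule torus.integrable_const_bound[where B="Bd powr (r - 1) * Bd"])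
       (auto intro!: mult_left_mono bd)
  have pt: "ennreal (norm (f x) powr r) \<le> ennreal (Bd powr (r - 1) * norm (f x))" for x
  proof (cases "norm (f x) = 0")
    case False
    then have "norm (f x) powr r = norm (f x) powr (r - 1) * norm (f x)"
      by (simp add: powr_diff)
    also have "\<dots> \<le> Bd powr (r - 1) * norm (f x)"
      using r1 bd[of x] by (intro mult_right_mono powr_mono2) auto
    finally show ?thesis by (rule ennreal_leI)
  qed simp
  define I where "I = (\<integral>\<^sup>+ x. ennreal (norm (f x) powr r) \<partial>torus_measure)"
  have "I \<le> (\<integral>\<^sup>+ x. ennreal (Bd powr (r - 1) * norm (f x)) \<partial>torus_measure)"
    unfolding I_def by (intro nn_integral_mono pt)
  also have "\<dots> = ennreal (\<integral>x. Bd powr (r - 1) * norm (f x) \<partial>torus_measure)"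
    by (rule nn_integral_eq_integral[OF fint]) auto
  also have "(\<integral>x. Bd powr (r - 1) * norm (f x) \<partial>torus_measure) = Bd powr (r - 1) * (\<integral>x. norm (f x) \<partial>torus_measure)"
    by simp
  also have "\<dots> \<le> Bd powr (r - 1) * I1"
    using int by (intro mult_left_mono) auto
  finally have Ile: "I \<le> ennreal (Bd powr (r - 1) * I1)" by (simp add: ennreal_leI)
  then have Ifin: "I \<noteq> \<infinity>" by (auto simp: top_unique)
  have "enn2real I \<le> Bd powr (r - 1) * I1"
    using Ile I1 by (intro enn2real_leI) auto
  then have "enn2real I powr (1 / r) \<le> (Bd powr (r - 1) * I1) powr (1 / r)"
    using r1 by (intro powr_mono2) auto
  also have "\<dots> = Bd powr (1 - recip q) * I1 powr (recip q)"
    using Bd I1 r1 by (simp add: powr_mult powr_powr rq field_simps)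
  also have "\<dots> \<le> 1" by (rule key)
  finally have "enn2real I powr (1 / r) \<le> 1" .
  then show ?thesis
    using False Ifin unfolding Lp_norm_def I_def r_def by (simp add: Let_def)
qed

lemma Lp_lower:
  fixes \<phi> :: "real^'d::finite \<Rightarrow> complex" and p :: ereal
  assumes p: "1 \<le> p" and meas[measurable]: "\<phi> \<in> borel_measurable borel"
    and E[measurable]: "E \<in> sets borel" and \<beta>: "0 < \<beta>" "\<beta> \<le> measure torus_measure E"
    and \<tau>: "0 < \<tau>" and on: "\<And>x. x \<in> E \<Longrightarrow> \<tau> \<le> norm (\<phi> x)"
  shows "ereal (\<tau> * \<beta> powr recip p) \<le> Lp_norm p \<phi>"
proof (cases "p = \<infinity>")
  case True
  have "ereal \<tau> \<le> esssup torus_measure (\<lambda>x. ereal (norm (\<phi> x)))"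
  proof (rule ccontr)
    assume "\<not> ?thesis"
    then have lt: "esssup torus_measure (\<lambda>x. ereal (norm (\<phi> x))) < ereal \<tau>" by simp
    have "AE x in torus_measure. \<not> (x \<in> E)"
      using esssup_AE[of "\<lambda>x. ereal (norm (\<phi> x))" torus_measure]
    proof eventually_elim
      case (elim x)
      then have "ereal (norm (\<phi> x)) < ereal \<tau>" using lt by (rule le_less_trans)
      then show ?case using on[of x] by auto
    qed
    then have "emeasure torus_measure {x\<in>space torus_measure. x \<in> E} = 0"
      by (rule emeasure_eq_0_AE)
    then have "measure torus_measure E = 0" by (simp add: measure_def)
    then show False using \<beta> by simp
  qed
  then show ?thesis using True \<beta> by (simp add: Lp_norm_def recip_def)
next
  case False
  define r where "r = real_of_ereal p"
  have r1: "1 \<le> r" using ereal_finite_ge1[OF p False] by (simp add: r_def)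
  have rp: "recip p = 1 / r" using False by (simp add: recip_def r_def)
  define I where "I = (\<integral>\<^sup>+ x. ennreal (norm (\<phi> x) powr r) \<partial>torus_measure)"
  have "ennreal (\<tau> powr r) * emeasure torus_measure E = (\<integral>\<^sup>+ x. ennreal (\<tau> powr r) * indicator E x \<partial>torus_measure)"
    by (rule nn_integral_cmult_indicator[symmetric]) simp
  also have "\<dots> \<le> I"
    unfolding I_def
  proof (intro nn_integral_mono)
    fix x
    show "ennreal (\<tau> powr r) * indicator E x \<le> ennreal (norm (\<phi> x) powr r)"
    proof (cases "x \<in> E")
      case True
      then have "\<tau> powr r \<le> norm (\<phi> x) powr r" using on[of x] \<tau> r1 by (intro powr_mono2) auto
      then show ?thesis using True by (simp add: ennreal_leI)
    qed simp
  qed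
  finally have I1: "ennreal (\<tau> powr r) * emeasure torus_measure E \<le> I" .
  have "ennreal (\<tau> powr r * \<beta>) \<le> ennreal (\<tau> powr r * measure torus_measure E)"
    using \<beta> by (intro ennreal_leI mult_left_mono) auto
  also have "\<dots> = ennreal (\<tau> powr r) * emeasure torus_measure E"
    by (simp add: torus.emeasure_eq_measure ennreal_mult)
  finally have le: "ennreal (\<tau> powr r * \<beta>) \<le> ennreal (\<tau> powr r) * emeasure torus_measure E" .
  have I2: "ennreal (\<tau> powr r * \<beta>) \<le> I" using le I1 by (rule order_trans)
  show ?thesis
  proof (cases "I = \<infinity>")
    case True
    then show ?thesis using False unfolding Lp_norm_def I_def r_def by (simp add: Let_def)
  next
    case Ifin: False
    have "enn2real (ennreal (\<tau> powr r * \<beta>)) \<le> enn2real I"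
      using I2 Ifin by (intro enn2real_mono) (auto simp: less_top)
    then have "\<tau> powr r * \<beta> \<le> enn2real I"
      using \<tau> \<beta> by simp
    then have "(\<tau> powr r * \<beta>) powr (1 / r) \<le> enn2real I powr (1 / r)"
      using r1 \<tau> \<beta> by (intro powr_mono2) auto
    moreover have "(\<tau> powr r * \<beta>) powr (1 / r) = \<tau> * \<beta> powr recip p"
      using \<tau> \<beta> r1 by (simp add: powr_mult powr_powr rp)
    ultimately show ?thesis
      using False Ifin unfolding Lp_norm_def I_def r_def by (simp add: Let_def)
  qed
qed


lemma norm_sq_expand:
  "complex_of_real ((norm (\<Sum>k\<in>F. a k * ee k x))^2) =
      (\<Sum>k\<in>F. \<Sum>l\<in>F. a k * cnj (a l) * ee (\<lambda>j. k j - l j) x)"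
proof -
  have "complex_of_real ((norm (\<Sum>k\<in>F. a k * ee k x))^2) = (\<Sum>k\<in>F. a k * ee k x) * cnj (\<Sum>k\<in>F. a k * ee k x)"
    by (rule complex_norm_square)
  also have "\<dots> = (\<Sum>k\<in>F. \<Sum>l\<in>F. a k * cnj (a l) * (ee k x * cnj (ee l x)))"
    apply (simp add: sum_distrib_left sum_distrib_right cnj_sum algebra_simps)
    apply (rule sum.swap)
    done
  finally show ?thesis by (simp add: ee_mult_cnj)
qed

lemma diff_freqs: "k \<in> freqs N \<Longrightarrow> l \<in> freqs N \<Longrightarrow> (\<lambda>j. k j - l j) \<in> freqs (\<lambda>j. 2 * N j)"
  by (auto simp: freqs_def) (smt (verit, best))

lemma sq_trig_poly:
  fixes a :: "('d::finite \<Rightarrow> int) \<Rightarrow> complex" and C :: real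
  shows "(\<lambda>x. complex_of_real (C * (norm (\<Sum>k\<in>freqs N. a k * ee k x))^2)) \<in> trig_poly (\<lambda>j. 2 * N j)"
proof -
  define F where "F = freqs N"
  define F2 where "F2 = freqs (\<lambda>j. 2 * N j)"
  define c where "c n = complex_of_real C * (\<Sum>k\<in>F. \<Sum>l\<in>F. if (\<lambda>j. k j - l j) = n then a k * cnj (a l) else 0)" for n
  have "complex_of_real (C * (norm (\<Sum>k\<in>F. a k * ee k x))^2) = (\<Sum>n\<in>F2. c n * ee n x)" for x
  proof -
    let ?T = "\<lambda>k l n. if (\<lambda>j. k j - l j) = n then complex_of_real C * (a k * cnj (a l) * ee n x) else 0"
    have "(\<Sum>n\<in>F2. c n * ee n x) = (\<Sum>n\<in>F2. \<Sum>k\<in>F. \<Sum>l\<in>F. ?T k l n)"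
      unfolding c_def sum_distrib_left sum_distrib_right by (intro sum.cong refl) simp
    also have "\<dots> = (\<Sum>k\<in>F. \<Sum>n\<in>F2. \<Sum>l\<in>F. ?T k l n)"
      by (rule sum.swap)
    also have "\<dots> = (\<Sum>k\<in>F. \<Sum>l\<in>F. \<Sum>n\<in>F2. ?T k l n)"
      by (rule sum.cong[OF refl]) (rule sum.swap)
    also have "\<dots> = (\<Sum>k\<in>F. \<Sum>l\<in>F. complex_of_real C * (a k * cnj (a l) * ee (\<lambda>j. k j - l j) x))"
    proof (intro sum.cong refl)
      fix k l assume "k \<in> F" "l \<in> F"
      then have "(\<lambda>j. k j - l j) \<in> F2" by (simp add: F_def F2_def diff_freqs)
      then show "(\<Sum>n\<in>F2. ?T k l n) = complex_of_real C * (a k * cnj (a l) * ee (\<lambda>j. k j - l j) x)"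
        by (simp add: F2_def)
    qed
    also have "\<dots> = complex_of_real C * (\<Sum>k\<in>F. \<Sum>l\<in>F. a k * cnj (a l) * ee (\<lambda>j. k j - l j) x)"
      by (simp add: sum_distrib_left)
    also have "\<dots> = complex_of_real C * complex_of_real ((norm (\<Sum>k\<in>F. a k * ee k x))^2)"
      by (simp only: norm_sq_expand)
    finally show ?thesis by simp
  qed
  then show ?thesis
    unfolding trig_poly_def F_def F2_def ee_def by (intro CollectI exI[of _ c]) (simp add: fun_eq_iff)
qed



lemma emeasure_torus_measure: "E \<in> sets borel \<Longrightarrow>
   emeasure (torus_measure :: (real^'d::finite) measure) E = emeasure lborel (torus \<inter> E) / ennreal ((2*pi)^CARD('d))"
  unfolding torus_measure_def by (subst emeasure_uniform_measure) (auto simp: emeasure_torus)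

lemma sum_abs_coeff_le:
  assumes "A = (\<Sum>k\<in>freqs N. (norm (a k))^2)" "real (vartheta N) \<le> 2 * A"
  shows "(\<Sum>k\<in>freqs N. norm (a k)) \<le> 4 * A"
proof -
  have A0: "0 \<le> A" using assms(1) by (simp add: sum_nonneg)
  have "(\<Sum>k\<in>freqs N. norm (a k))^2 \<le> (\<Sum>k\<in>freqs N. (norm (a k))^2) * card (freqs N)"
    by (rule sum_squared_le_sum_of_squares)
  also have "\<dots> = A * real (vartheta N)" using card_freqs[of N] assms(1) by simp
  also have "\<dots> \<le> A * (2 * A)" using assms(2) A0 by (rule mult_left_mono)
  also have "\<dots> \<le> (4 * A)^2"
  proof -
    have "(4*A)^2 - A*(2*A) = 14*(A*A)" by (simp add: power2_eq_square algebra_simps)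
    moreover have "0 \<le> A*A" by simp
    ultimately show ?thesis by linarith
  qed
  finally have "(\<Sum>k\<in>freqs N. norm (a k))^2 \<le> (4 * A)^2" .
  then show ?thesis by (rule power2_le_imp_le) (use A0 in simp)
qed

lemma box_lower:
  fixes a :: "('d::finite \<Rightarrow> int) \<Rightarrow> complex" and N :: "'d \<Rightarrow> nat" and x0 :: "real^'d"
  assumes x0: "x0 \<in> torus" and gx0: "(\<Sum>k\<in>freqs N. a k * ee k x0) = complex_of_real A"
    and A: "A = (\<Sum>k\<in>freqs N. (norm (a k))^2)" and V: "real (vartheta N) \<le> 2 * A"
  shows "\<exists>E. E \<in> sets borel \<and> 1 / ((16*pi*CARD('d))^CARD('d) * real (vartheta N)) \<le> measure torus_measure E
      \<and> (\<forall>x\<in>E. A/2 \<le> norm (\<Sum>k\<in>freqs N. a k * ee k x))"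
proof -
  define d where "d = real CARD('d)"
  have d1: "1 \<le> d" by (simp add: d_def)
  define \<delta> where "\<delta> j = 1 / (8 * d * (2 * real (N j) + 1))" for j
  have \<delta>pos: "0 < \<delta> j" for j using d1 by (simp add: \<delta>_def)
  have \<delta>le: "\<delta> j \<le> 1/8" for j
  proof -
    have "8 * 1 * 1 \<le> 8 * d * (2 * real (N j) + 1)"
      using d1 by (intro mult_mono) auto
    then show ?thesis unfolding \<delta>_def by (intro divide_left_mono) auto
  qed
  define lo where "lo = (\<chi> j. if x0$j + \<delta> j < 2*pi then x0$j else x0$j - \<delta> j)"
  define hi where "hi = (\<chi> j. lo$j + \<delta> j)"
  define E where "E = cbox lo hi"
  have x0j: "0 \<le> x0$j" "x0$j < 2*pi" for j using x0 by (auto simp: torus_def)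
  have pi3: "3 < pi" by (rule pi_gt3)
  have inE: "lo$j \<le> x$j \<and> x$j \<le> lo$j + \<delta> j" if "x \<in> E" for x j
    using that by (auto simp: E_def hi_def mem_box_cart)
  have Etorus: "E \<subseteq> torus"
  proof
    fix x assume "x \<in> E"
    have "0 \<le> x$j \<and> x$j < 2*pi" for j
      using inE[OF \<open>x \<in> E\<close>, of j] x0j[of j] \<delta>le[of j] \<delta>pos[of j] pi3
      by (auto simp: lo_def split: if_splits)
    then show "x \<in> torus" by (simp add: torus_def)
  qed
  have dist: "\<bar>x$j - x0$j\<bar> \<le> \<delta> j" if "x \<in> E" for x j
    using inE[OF that, of j] by (auto simp: lo_def split: if_splits)
  have prod\<delta>: "(\<Prod>j\<in>UNIV. \<delta> j) * ((8*d)^CARD('d) * real (vartheta N)) = 1"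
  proof -
    have "(8*d)^CARD('d) * real (vartheta N) = (\<Prod>j\<in>UNIV. 8 * d * (2 * real (N j) + 1))"
      by (simp add: vartheta_def prod.distrib of_nat_prod add.commute)
    then have "(\<Prod>j\<in>UNIV. \<delta> j) * ((8*d)^CARD('d) * real (vartheta N)) = (\<Prod>j\<in>UNIV. \<delta> j * (8 * d * (2 * real (N j) + 1)))"
      by (simp add: prod.distrib)
    also have "\<dots> = (\<Prod>j\<in>(UNIV::'d set). 1)"
      by (rule prod.cong[OF refl]) (use d1 in \<open>simp add: \<delta>_def\<close>)
    finally show ?thesis by simp
  qed
  have Emeas: "measure torus_measure E = 1 / ((16*pi*CARD('d))^CARD('d) * real (vartheta N))"
  proof -
    have lohi: "lo$j \<le> hi$j" for j using \<delta>pos[of j] by (simp add: hi_def)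
    have "emeasure (torus_measure :: (real^'d) measure) E = emeasure lborel (torus \<inter> E) / ennreal ((2*pi)^CARD('d))"
      by (rule emeasure_torus_measure) (simp add: E_def)
    also have "torus \<inter> E = E" using Etorus by auto
    also have "emeasure lborel E = ennreal (\<Prod>j\<in>UNIV. \<delta> j)"
      unfolding E_def by (subst emeasure_cbox_cart[OF lohi]) (simp add: hi_def)
    also have "ennreal (\<Prod>j\<in>UNIV. \<delta> j) / ennreal ((2*pi)^CARD('d)) = ennreal ((\<Prod>j\<in>UNIV. \<delta> j) / (2*pi)^CARD('d))"
      by (rule divide_ennreal) (auto intro!: prod_nonneg prod_pos less_imp_le \<delta>pos)
    finally have em: "emeasure torus_measure E = ennreal ((\<Prod>j\<in>UNIV. \<delta> j) / (2*pi)^CARD('d))" .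
    have "measure torus_measure E = (\<Prod>j\<in>UNIV. \<delta> j) / (2*pi)^CARD('d)"
    proof -
      have Ppos: "0 < (\<Prod>j\<in>UNIV. \<delta> j)" by (rule prod_pos) (use \<delta>pos in auto)
      show ?thesis unfolding measure_def em using Ppos by (intro enn2real_ennreal) simp
    qed
    also have "\<dots> = 1 / ((16*pi*CARD('d))^CARD('d) * real (vartheta N))"
    proof -
      define P where "P = (\<Prod>j\<in>UNIV. \<delta> j)"
      define X where "X = (8*d)^CARD('d) * real (vartheta N)"
      have Xpos: "0 < X" using d1 vartheta_pos[of N] by (simp add: X_def)
      have "P * X = 1" using prod\<delta> by (simp add: P_def X_def)
      then have P: "P = 1 / X" using Xpos by (simp add: eq_divide_eq)
      have "16*pi*real CARD('d) = (8*d)*(2*pi)" by (simp add: d_def)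
      then have "(16*pi*real CARD('d))^CARD('d) = (8*d)^CARD('d) * (2*pi)^CARD('d)"
        by (simp only: power_mult_distrib)
      then have e: "(16*pi*real CARD('d))^CARD('d) * real (vartheta N) = X * (2*pi)^CARD('d)"
        by (simp add: X_def mult_ac)
      show ?thesis unfolding P_def[symmetric] P e by simp
    qed
    finally show ?thesis .
  qed
  have lip: "norm (ee k x - ee k x0) \<le> 1/8" if "x \<in> E" "k \<in> freqs N" for x k
  proof -
    have "norm (ee k x - ee k x0) \<le> \<bar>(\<Sum>j\<in>UNIV. of_int (k j) * x$j) - (\<Sum>j\<in>UNIV. of_int (k j) * x0$j)\<bar>"
      unfolding ee_def by (rule norm_cis_diff)
    also have "\<dots> = \<bar>\<Sum>j\<in>UNIV. of_int (k j) * (x$j - x0$j)\<bar>"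
      by (simp add: sum_subtractf[symmetric] algebra_simps)
    also have "\<dots> \<le> (\<Sum>j\<in>UNIV. \<bar>of_int (k j) * (x$j - x0$j)\<bar>)" by (rule sum_abs)
    also have "\<dots> \<le> (\<Sum>j\<in>(UNIV::'d set). 1 / (8 * d))"
    proof (rule sum_mono)
      fix j
      have "\<bar>k j\<bar> \<le> int (N j)" using that(2) by (simp add: freqs_def)
      then have "real_of_int \<bar>k j\<bar> \<le> real_of_int (int (N j))" by (simp only: of_int_le_iff)
      then have kj: "\<bar>real_of_int (k j)\<bar> \<le> real (N j)" by simp
      have "\<bar>of_int (k j) * (x$j - x0$j)\<bar> \<le> real (N j) * \<delta> j"
        unfolding abs_mult using kj dist[OF that(1), of j] by (intro mult_mono) auto
      also have "\<dots> \<le> (2 * real (N j) + 1) * \<delta> j"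
        using \<delta>pos[of j] by (intro mult_right_mono) auto
      also have "\<dots> = 1 / (8 * d)"
        using d1 by (simp add: \<delta>_def)
      finally show "\<bar>of_int (k j) * (x$j - x0$j)\<bar> \<le> 1 / (8 * d)" .
    qed
    also have "\<dots> = 1/8" using d1 by (simp add: d_def)
    finally show ?thesis .
  qed
  have A0: "0 \<le> A" using A by (simp add: sum_nonneg)
  have "A/2 \<le> norm (\<Sum>k\<in>freqs N. a k * ee k x)" if "x \<in> E" for x
  proof -
    have "norm ((\<Sum>k\<in>freqs N. a k * ee k x) - (\<Sum>k\<in>freqs N. a k * ee k x0))
        = norm (\<Sum>k\<in>freqs N. a k * (ee k x - ee k x0))"
      by (simp add: sum_subtractf[symmetric] algebra_simps)
    also have "\<dots> \<le> (\<Sum>k\<in>freqs N. norm (a k) * (1/8))"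
    proof (rule order_trans[OF norm_sum], rule sum_mono)
      fix k assume "k \<in> freqs N"
      then show "norm (a k * (ee k x - ee k x0)) \<le> norm (a k) * (1/8)"
        unfolding norm_mult by (intro mult_left_mono lip[OF that]) auto
    qed
    also have "\<dots> = (\<Sum>k\<in>freqs N. norm (a k)) / 8" by (simp add: sum_divide_distrib)
    also have "\<dots> \<le> A / 2" using sum_abs_coeff_le[OF A V] by simp
    finally have "norm ((\<Sum>k\<in>freqs N. a k * ee k x) - complex_of_real A) \<le> A/2" using gx0 by simp
    moreover have "norm (complex_of_real A) = A" using A0 by simp
    ultimately show ?thesis using norm_triangle_ineq2[of "complex_of_real A" "\<Sum>k\<in>freqs N. a k * ee k x"]
      by (simp add: norm_minus_commute)
  qed
  then show ?thesis using Emeas by (intro exI[of _ E]) (auto simp: E_def)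
qed



lemma recip_range: "1 \<le> q \<Longrightarrow> 0 \<le> recip q \<and> recip q \<le> 1"
  by (cases q) (auto simp: recip_def)

lemma final_arith:
  fixes V A rq rp \<kappa> :: real
  assumes V: "1 \<le> V" and A: "V / 2 \<le> A" and rq: "0 \<le> rq" "rq \<le> 1" and rp: "0 \<le> rp" "rp \<le> 1"
    and \<kappa>: "0 < \<kappa>" "\<kappa> \<le> 1"
  shows "(\<kappa>/16) * V powr (rq - rp) \<le> ((A/2)^2 / (V powr (1 - rq) * A)) * (\<kappa>/(2*V)) powr rp"
proof -
  define W where "W = V powr (1 - rq)"
  have Wpos: "0 < W" using V by (simp add: W_def)
  have Apos: "0 < A" using A V by linarith
  have VW: "V / W = V powr rq"
    using V by (simp add: W_def powr_diff)
  have t1: "(A/2)^2 / (W * A) = A / (4 * W)"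
    using Apos Wpos by (simp add: power2_eq_square field_simps)
  have t2: "V powr rq / 8 \<le> A / (4 * W)"
  proof -
    have "V powr rq / 8 = (V / 2) / (4 * W)" using VW Wpos by (simp add: field_simps)
    also have "\<dots> \<le> A / (4 * W)" using A Wpos by (intro divide_right_mono) auto
    finally show ?thesis .
  qed
  have b1: "(\<kappa>/(2*V)) powr rp = (\<kappa>/2) powr rp * V powr (- rp)"
    using V \<kappa> by (simp add: powr_divide powr_minus_divide powr_mult field_simps)
  have b2: "\<kappa>/2 \<le> (\<kappa>/2) powr rp"
  proof -
    have "(\<kappa>/2) powr 1 \<le> (\<kappa>/2) powr rp" using \<kappa> rp by (intro powr_mono') auto
    then show ?thesis using \<kappa> by simp
  qed
  have "(\<kappa>/16) * V powr (rq - rp) = (V powr rq / 8) * ((\<kappa>/2) * V powr (- rp))"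
    by (simp add: powr_diff powr_minus_divide field_simps)
  also have "\<dots> \<le> (A / (4 * W)) * ((\<kappa>/2) powr rp * V powr (- rp))"
    using t2 b2 \<kappa> Apos Wpos by (intro mult_mono mult_right_mono) auto
  also have "\<dots> = ((A/2)^2 / (W * A)) * (\<kappa>/(2*V)) powr rp"
    by (simp add: t1 b1)
  finally show ?thesis by (simp add: W_def)
qed


lemma Lp_norm_cong_norm: "(\<And>x. norm (f x) = norm (g x)) \<Longrightarrow> Lp_norm p f = Lp_norm p g"
  by (simp add: Lp_norm_def)

lemma sum_coeff_sq_le:
  "(\<Sum>k\<in>freqs N. norm (a k))^2 \<le> (\<Sum>k\<in>freqs N. (norm (a k))^2) * real (vartheta N)"
  using sum_squared_le_sum_of_squares[of "\<lambda>k. norm (a k)" "freqs N"] by (simp add: card_freqs)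

theorem lemma4p1:
  "\<exists>c>0. \<forall>(p::ereal) (q::ereal) (N::'d::finite \<Rightarrow> nat) (m::nat).
     1 \<le> q \<longrightarrow> q \<le> p \<longrightarrow> 1 \<le> m \<longrightarrow> real m \<le> real (vartheta N) / 2 \<longrightarrow>
     ereal (c * real (vartheta N) powr (recip q - recip p))
       \<le> optimal_recovery m (trig_poly_ball (\<lambda>j. 2 * N j) q :: (real^'d \<Rightarrow> complex) set) p"
proof -
  define \<kappa> :: real where "\<kappa> = 1 / (16*pi*CARD('d))^CARD('d)"
  have \<kappa>pos: "0 < \<kappa>" by (simp add: \<kappa>_def)
  have \<kappa>le: "\<kappa> \<le> 1"
  proof -
    have "1 \<le> 16*pi*real CARD('d)" using pi_gt3 by (simp add: mult_ge1_I)
    then have "1 \<le> (16*pi*real CARD('d))^CARD('d)" by (rule one_le_power)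
    then show ?thesis by (simp add: \<kappa>_def)
  qed
  show ?thesis
  proof (intro exI[of _ "\<kappa>/16"] conjI allI impI)
    show "0 < \<kappa>/16" using \<kappa>pos by simp
    fix p q :: ereal and N :: "'d \<Rightarrow> nat" and m :: nat
    assume q1: "1 \<le> q" and qp: "q \<le> p" and m1: "1 \<le> m" and mV: "real m \<le> real (vartheta N) / 2"
    have p1: "1 \<le> p" using q1 qp by order
    define V where "V = real (vartheta N)"
    have V1: "1 \<le> V" using vartheta_pos[of N] by (simp add: V_def)
    define rq where "rq = recip q"
    define rp where "rp = recip p"
    have rq: "0 \<le> rq" "rq \<le> 1" using recip_range[OF q1] by (auto simp: rq_def)
    have rp: "0 \<le> rp" "rp \<le> 1" using recip_range[OF p1] by (auto simp: rp_def)
    define Ball where "Ball = (trig_poly_ball (\<lambda>j. 2 * N j) q :: (real^'d \<Rightarrow> complex) set)"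
    show "ereal (\<kappa>/16 * real (vartheta N) powr (recip q - recip p)) \<le> optimal_recovery m Ball p"
      unfolding optimal_recovery_def
    proof (intro INF_greatest)
      fix \<xi> :: "(real^'d) list" and M :: "complex list \<Rightarrow> real^'d \<Rightarrow> complex"
      assume \<xi>: "\<xi> \<in> {\<xi>. length \<xi> = m \<and> distinct \<xi> \<and> set \<xi> \<subseteq> torus}"
        and M: "M \<in> {M. \<forall>v. M v \<in> Lp_space p}"
      have len: "real (length \<xi>) \<le> real (vartheta N) / 2" using \<xi> mV by simp
      obtain a x0 A where x0: "x0 \<in> torus"
        and zero: "\<forall>y\<in>set \<xi>. (\<Sum>k\<in>freqs N. a k * ee k y) = 0"
        and gx0: "(\<Sum>k\<in>freqs N. a k * ee k x0) = complex_of_real A"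
        and A: "A = (\<Sum>k\<in>freqs N. (norm (a k))^2)" and AV: "real (vartheta N) / 2 \<le> A"
        using key_exists[OF len] by blast
      define g where "g x = (\<Sum>k\<in>freqs N. a k * ee k x)" for x
      have Apos: "0 < A" using AV V1 by (simp add: V_def)
      define Uf where "Uf = V powr (1 - rq) * A"
      have Ufpos: "0 < Uf" using Apos V1 by (simp add: Uf_def)
      define F0 where "F0 x = complex_of_real ((1/Uf) * (norm (g x))^2)" for x
      define G0 where "G0 x = complex_of_real ((- (1/Uf)) * (norm (g x))^2)" for x
      have F0m[measurable]: "F0 \<in> borel_measurable borel" unfolding F0_def g_def by measurable
      have G0m[measurable]: "G0 \<in> borel_measurable borel" unfolding G0_def g_def by measurable
      have nF0: "norm (F0 x) = (norm (g x))^2 / Uf" for x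
        unfolding F0_def norm_of_real using Ufpos by simp
      have nG0: "norm (G0 x) = norm (F0 x)" for x
        unfolding F0_def G0_def norm_of_real by simp
      have gbound: "(norm (g x))^2 \<le> V * A" for x
      proof -
        have "norm (g x) \<le> (\<Sum>k\<in>freqs N. norm (a k))" unfolding g_def by (rule norm_trig_le)
        then have "(norm (g x))^2 \<le> (\<Sum>k\<in>freqs N. norm (a k))^2" by (intro power_mono) auto
        also have "\<dots> \<le> A * V" unfolding A V_def by (rule sum_coeff_sq_le)
        finally show ?thesis by (simp add: mult.commute)
      qed
      have LqF0: "Lp_norm q F0 \<le> 1"
      proof (rule Lp_le_1[OF q1 F0m])
        show "norm (F0 x) \<le> V powr rq" for x
        proof -
          have "norm (F0 x) \<le> V * A / Uf" unfolding nF0 using gbound[of x] Ufpos by (intro divide_right_mono) auto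
          also have "V * A / Uf = V powr rq" using V1 Apos by (simp add: Uf_def powr_diff)
          finally show ?thesis .
        qed
        show "0 < V powr rq" using V1 by simp
        show "0 < V powr (rq - 1)" using V1 by simp
        have "(\<integral>x. norm (F0 x) \<partial>torus_measure) = (\<integral>x. (1/Uf) * (norm (g x))^2 \<partial>torus_measure)"
          by (simp add: nF0)
        also have "\<dots> = (1/Uf) * A" unfolding g_def by (simp add: parseval A)
        also have "\<dots> = V powr (rq - 1)" using V1 Apos by (simp add: Uf_def powr_diff)
        finally show "(\<integral>x. norm (F0 x) \<partial>torus_measure) \<le> V powr (rq - 1)" by simp
        have "(V powr rq) powr (1 - recip q) * (V powr (rq - 1)) powr (recip q) = V powr (rq * (1 - rq) + (rq - 1) * rq)"
          by (simp add: powr_powr powr_add rq_def)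
        also have "rq * (1 - rq) + (rq - 1) * rq = 0" by (simp add: algebra_simps)
        finally show "(V powr rq) powr (1 - recip q) * (V powr (rq - 1)) powr (recip q) \<le> 1" using V1 by simp
      qed
      have F0eq: "F0 = (\<lambda>x. complex_of_real ((1/Uf) * (norm (\<Sum>k\<in>freqs N. a k * ee k x))^2))"
        by (rule ext) (simp only: F0_def g_def)
      have G0eq: "G0 = (\<lambda>x. complex_of_real ((- (1/Uf)) * (norm (\<Sum>k\<in>freqs N. a k * ee k x))^2))"
        by (rule ext) (simp only: G0_def g_def)
      have F0T: "F0 \<in> trig_poly (\<lambda>j. 2 * N j)" unfolding F0eq by (rule sq_trig_poly)
      have G0T: "G0 \<in> trig_poly (\<lambda>j. 2 * N j)" unfolding G0eq by (rule sq_trig_poly)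
      have F0B: "F0 \<in> Ball"
        unfolding Ball_def trig_poly_ball_def using LqF0 F0T by blast
      have G0B: "G0 \<in> Ball"
      proof -
        have "Lp_norm q G0 = Lp_norm q F0" by (rule Lp_norm_cong_norm) (simp add: nG0)
        then show ?thesis
          unfolding Ball_def trig_poly_ball_def using LqF0 G0T by simp
      qed
      have mapeq: "map G0 \<xi> = map F0 \<xi>"
        using zero by (auto simp: F0_def G0_def g_def)
      define h where "h = M (map F0 \<xi>)"
      have hm[measurable]: "h \<in> borel_measurable borel"
      proof -
        have "h \<in> borel_measurable torus_measure" using M by (simp add: h_def Lp_space_def)
        then show ?thesis by (simp add: measurable_cong_sets[OF sets_torus_measure refl])
      qed
      obtain E where E[measurable]: "E \<in> sets borel" and Em: "\<kappa> / V \<le> measure torus_measure E"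
        and Eg: "\<forall>x\<in>E. A/2 \<le> norm (g x)"
        using box_lower[OF x0 gx0 A] AV unfolding g_def \<kappa>_def V_def by auto
      define \<tau> where "\<tau> = (A/2)^2 / Uf"
      have \<tau>pos: "0 < \<tau>" using Apos Ufpos by (simp add: \<tau>_def)
      have onE: "\<tau> \<le> norm (F0 x)" if "x \<in> E" for x
      proof -
        have "(A/2)^2 \<le> (norm (g x))^2" using Eg that Apos by (intro power_mono) auto
        then show ?thesis unfolding nF0 \<tau>_def using Ufpos by (intro divide_right_mono) auto
      qed
      define E1 where "E1 = {x\<in>E. \<tau> \<le> norm (F0 x - h x)}"
      define E2 where "E2 = {x\<in>E. \<tau> \<le> norm (G0 x - h x)}"
      have E1m[measurable]: "E1 \<in> sets borel" unfolding E1_def by measurable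
      have E2m[measurable]: "E2 \<in> sets borel" unfolding E2_def by measurable
      have Esub: "E \<subseteq> E1 \<union> E2"
      proof
        fix x assume "x \<in> E"
        have G0neg: "G0 x = - F0 x" by (simp add: F0_def G0_def)
        have "(F0 x - h x) - (G0 x - h x) = 2 * F0 x" using G0neg by simp
        then have "2 * norm (F0 x) = norm ((F0 x - h x) - (G0 x - h x))"
          by (simp add: norm_mult)
        also have "\<dots> \<le> norm (F0 x - h x) + norm (G0 x - h x)" by (rule norm_triangle_ineq4)
        finally show "x \<in> E1 \<union> E2" using onE[OF \<open>x \<in> E\<close>] \<open>x \<in> E\<close> by (auto simp: E1_def E2_def)
      qed
      have "measure torus_measure E \<le> measure torus_measure (E1 \<union> E2)"
        using Esub by (intro torus.finite_measure_mono) auto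
      also have "\<dots> \<le> measure torus_measure E1 + measure torus_measure E2"
        by (intro measure_subadditive) (auto simp: torus.emeasure_eq_measure)
      finally have Esum: "\<kappa> / V \<le> measure torus_measure E1 + measure torus_measure E2" using Em by linarith
      define \<beta> where "\<beta> = \<kappa> / (2 * V)"
      have \<beta>pos: "0 < \<beta>" using \<kappa>pos V1 by (simp add: \<beta>_def)
      have arith: "\<kappa>/16 * V powr (rq - rp) \<le> \<tau> * \<beta> powr rp"
        unfolding \<tau>_def Uf_def \<beta>_def
        by (rule final_arith[OF V1 _ rq rp \<kappa>pos \<kappa>le]) (use AV in \<open>simp add: V_def\<close>)
      have lower: "ereal (\<tau> * \<beta> powr rp) \<le> (SUP f\<in>Ball. Lp_norm p (\<lambda>x. f x - M (map f \<xi>) x))"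
      proof (cases "\<beta> \<le> measure torus_measure E1")
        case True
        have "ereal (\<tau> * \<beta> powr rp) \<le> Lp_norm p (\<lambda>x. F0 x - h x)"
          unfolding rp_def
          by (rule Lp_lower[OF p1 _ E1m \<beta>pos True \<tau>pos]) (auto simp: E1_def)
        also have "\<dots> \<le> (SUP f\<in>Ball. Lp_norm p (\<lambda>x. f x - M (map f \<xi>) x))"
          unfolding h_def by (rule SUP_upper[OF F0B])
        finally show ?thesis .
      next
        case False
        then have True: "\<beta> \<le> measure torus_measure E2" using Esum by (simp add: \<beta>_def)
        have "ereal (\<tau> * \<beta> powr rp) \<le> Lp_norm p (\<lambda>x. G0 x - h x)"
          unfolding rp_def
          by (rule Lp_lower[OF p1 _ E2m \<beta>pos True \<tau>pos]) (auto simp: E2_def)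
        also have "\<dots> = Lp_norm p (\<lambda>x. G0 x - M (map G0 \<xi>) x)" by (simp add: h_def mapeq)
        also have "\<dots> \<le> (SUP f\<in>Ball. Lp_norm p (\<lambda>x. f x - M (map f \<xi>) x))"
          by (rule SUP_upper[OF G0B])
        finally show ?thesis .
      qed
      have "ereal (\<kappa>/16 * real (vartheta N) powr (recip q - recip p)) \<le> ereal (\<tau> * \<beta> powr rp)"
        using arith by (simp add: V_def rq_def rp_def)
      also note lower
      finally show "ereal (\<kappa>/16 * real (vartheta N) powr (recip q - recip p)) \<le> (SUP f\<in>Ball. Lp_norm p (\<lambda>x. f x - M (map f \<xi>) x))" .
    qed
  qed
qed


end
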